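(* Let $M\in\mathbb{R}^{n\times n}$ be such that the function $x\mapsto x^TMx$ belongs to the class $\mathcal{Q}$. Define $Z=\sum_{P\in\mathcal{P}} P^TMP$, where $\mathcal{P}$ is the set of all $n\times n$ permutation matrices. Then the function $x\mapsto x^TZx$ also belongs to $\mathcal{Q}$.
   Context: Fix a positive integer $n$. Let $\mathbf{e}\in\mathbb{R}^n$ be the all-ones vector. A square matrix is stochastic if it is entrywise nonnegative and each row sums to $1$. Let $\mathcal{A}\subset\mathbb{R}^{n\times n}$ be the set of stochastic matrices $A=(a_{ij})$ such that: (i) $a_{ii}>0$ for all $i$; (ii) all positive entries in any given row of $A$ are equal; (iii) $a_{ij}>0$ if and only if $a_{ji}>0$; (iv) the graph on $\{1,\dots,n\}$ with edge set $\{(i,j): a_{ij}>0\}$ is connected. The class $\mathcal{Q}$ consists of all functions $Q(x)=x^TMx$ on $\mathbb{R}^n$ where (a) $M$ is nonzero, symmetric and nonnegative definite; (b) $x^TA^TMAx\le x^TMx$ for all $A\in\mathcal{A}$ and $x\in\mathbb{R}^n$; (c) $Q(\mathbf{e})=0$ (equivalently $M\mathbf{e}=0$). For a permutation $\sigma$ of $\{1,\dots,n\}$, the permutation matrix $P_\sigma$ is defined by $(P_\sigma x)_i=x_{\sigma(i)}$; $\mathcal{P}$ is the set of all such matrices. *)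

theory Defs
  imports "HOL-Analysis.Analysis" "HOL-Combinatorics.Permutations"
begin

definition stochastic :: "real^'n^'n \<Rightarrow> bool" where
  "stochastic A \<longleftrightarrow> (\<forall>i j. A $ i $ j \<ge> 0) \<and> (\<forall>i. (\<Sum>j\<in>UNIV. A $ i $ j) = 1)"

definition graph_connected :: "real^'n^'n \<Rightarrow> bool" where
  "graph_connected A \<longleftrightarrow> (\<forall>i j. (i, j) \<in> {(k, l). A $ k $ l > 0}\<^sup>*)"

definition classA :: "(real^'n^'n) set" where
  "classA = {A. stochastic A
      \<and> (\<forall>i. A $ i $ i > 0)
      \<and> (\<forall>i j k. A $ i $ j > 0 \<and> A $ i $ k > 0 \<longrightarrow> A $ i $ j = A $ i $ k)
      \<and> (\<forall>i j. A $ i $ j > 0 \<longleftrightarrow> A $ j $ i > 0)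
      \<and> graph_connected A}"

text \<open>The class \<Q>, described via the matrix M of Q(x) = x^T M x.\<close>
definition classQ :: "real^'n^'n \<Rightarrow> bool" where
  "classQ M \<longleftrightarrow> M \<noteq> 0 \<and> transpose M = M \<and> (\<forall>x. x \<bullet> (M *v x) \<ge> 0)
      \<and> (\<forall>A\<in>classA. \<forall>x. (A *v x) \<bullet> (M *v (A *v x)) \<le> x \<bullet> (M *v x))
      \<and> (let e = ((\<chi> i. 1) :: real^'n) in e \<bullet> (M *v e) = 0)"

text \<open>Permutation matrix: (P_\<sigma> x)_i = x_{\<sigma> i}.\<close>
definition perm_matrix :: "('n \<Rightarrow> 'n) \<Rightarrow> real^'n^'n" where
  "perm_matrix \<sigma> = (\<chi> i j. if \<sigma> i = j then 1 else 0)"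

definition perm_matrices :: "(real^'n^'n) set" where
  "perm_matrices = {perm_matrix \<sigma> | \<sigma>. \<sigma> permutes (UNIV :: 'n set)}"

end

theory Submission
  imports Defs
begin

lemma sum_mv: "finite S \<Longrightarrow> (sum f S) *v (x::real^'n) = (\<Sum>P\<in>S. f P *v x)"
  by (induction S rule: finite_induct) (auto simp: matrix_vector_mult_add_rdistrib)

lemma quad_conj: fixes P :: "real^'n^'n" shows "x \<bullet> ((transpose P ** M ** P) *v x) = (P *v x) \<bullet> (M *v (P *v (x::real^'n)))"
proof -
  have "(transpose P ** M ** P) *v x = transpose P *v (M *v (P *v x))"
    by (simp add: matrix_vector_mul_assoc matrix_mul_assoc)
  moreover have "x \<bullet> (transpose P *v y) = y \<bullet> (P *v x)" for y :: "real^'n"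
    by (metis dot_lmul_matrix inner_commute transpose_matrix_vector)
  ultimately show ?thesis by (simp add: inner_commute)
qed

lemma sym_dot: assumes "transpose M = M"
  shows "x \<bullet> (M *v y) = y \<bullet> (M *v (x::real^'n))"
  by (metis assms dot_lmul_matrix inner_commute transpose_matrix_vector)

lemma quad_zero: assumes "transpose M = M" "\<forall>x. x \<bullet> (M *v x) = (0::real)"
  shows "M = (0::real^'n^'n)"
proof -
  have "\<forall>x. M *v x = 0 *v x"
  proof
    fix x :: "real^'n"
    let ?y = "M *v x"
    have "(x + ?y) \<bullet> (M *v (x + ?y)) = x \<bullet> (M *v x) + ?y \<bullet> (M *v ?y) + x \<bullet> (M *v ?y) + ?y \<bullet> (M *v x)"
      by (simp add: matrix_vector_right_distrib inner_add_left inner_add_right)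
    hence "x \<bullet> (M *v ?y) + ?y \<bullet> (M *v x) = 0" using assms(2) by (metis add_0 add.assoc)
    hence "?y \<bullet> ?y = 0" using sym_dot[OF assms(1), of x ?y] by simp
    thus "M *v x = 0 *v x" by simp
  qed
  thus ?thesis using matrix_eq by blast
qed

definition conjm :: "('n \<Rightarrow> 'n) \<Rightarrow> real^'n^'n \<Rightarrow> real^'n^'n" where
  "conjm \<sigma> A = (\<chi> i j. A $ \<sigma> i $ \<sigma> j)"

lemma pm_mv: "perm_matrix \<sigma> *v x = (\<chi> i. x $ \<sigma> i)"
  unfolding perm_matrix_def matrix_vector_mult_def
  by (simp add: if_distrib[of "\<lambda>t. t * _"] sum.delta cong: if_cong)

lemma conj_mv: assumes "\<sigma> permutes UNIV"
  shows "perm_matrix \<sigma> *v (A *v x) = conjm \<sigma> A *v (perm_matrix \<sigma> *v x)"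
proof -
  have "(\<Sum>j\<in>UNIV. A $ \<sigma> i $ j * x $ j) = (\<Sum>j\<in>UNIV. A $ \<sigma> i $ \<sigma> j * x $ \<sigma> j)" for i
    using sum.permute[OF assms, of "\<lambda>j. A $ \<sigma> i $ j * x $ j"] by (simp add: comp_def)
  thus ?thesis unfolding pm_mv by (simp add: conjm_def matrix_vector_mult_def vec_eq_iff)
qed

lemma conj_classA: assumes "\<sigma> permutes UNIV" "A \<in> classA"
  shows "conjm \<sigma> A \<in> classA"
proof -
  have st: "stochastic A" and d: "\<forall>i. A $ i $ i > 0"
    and r: "\<forall>i j k. A $ i $ j > 0 \<and> A $ i $ k > 0 \<longrightarrow> A $ i $ j = A $ i $ k"
    and s: "\<forall>i j. A $ i $ j > 0 \<longleftrightarrow> A $ j $ i > 0" and c: "graph_connected A"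
    using assms(2) by (auto simp: classA_def)
  have rs: "(\<Sum>j\<in>UNIV. A $ \<sigma> i $ \<sigma> j) = 1" for i
    using sum.permute[OF assms(1), of "\<lambda>j. A $ \<sigma> i $ j"] st by (simp add: comp_def stochastic_def)
  have "stochastic (conjm \<sigma> A)" using st rs by (simp add: stochastic_def conjm_def)
  moreover have "graph_connected (conjm \<sigma> A)"
    unfolding graph_connected_def
  proof (intro allI)
    fix i j
    let ?R = "{(k, l). conjm \<sigma> A $ k $ l > 0}"
    have gen: "(a, b) \<in> {(k, l). A $ k $ l > 0}\<^sup>* \<Longrightarrow> (inv \<sigma> a, inv \<sigma> b) \<in> ?R\<^sup>*" for a b
    proof (induction rule: rtrancl_induct)
      case base thus ?case by simp
    next
      case (step y z)
      have "(inv \<sigma> y, inv \<sigma> z) \<in> ?R" using step(2)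
        by (simp add: conjm_def permutes_inverses(1)[OF assms(1)])
      thus ?case using step(3) by (meson rtrancl.rtrancl_into_rtrancl)
    qed
    have "(\<sigma> i, \<sigma> j) \<in> {(k, l). A $ k $ l > 0}\<^sup>*" using c by (simp add: graph_connected_def)
    from gen[OF this] show "(i, j) \<in> ?R\<^sup>*" by (simp add: permutes_inverses(2)[OF assms(1)])
  qed
  ultimately show ?thesis using d r s by (simp add: classA_def conjm_def)
qed

theorem lemma1:
  fixes M :: "real^'n^'n"
  assumes "classQ M"
  shows "classQ (\<Sum>P\<in>perm_matrices. transpose P ** M ** P)"
proof -
  let ?q = "\<lambda>N (x::real^'n). x \<bullet> (N *v x)"
  let ?Z = "\<Sum>P\<in>perm_matrices. transpose P ** M ** P"
  have nz: "M \<noteq> 0" and sym: "transpose M = M" and psd: "\<forall>x. ?q M x \<ge> 0"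
    and con: "\<forall>A\<in>classA. \<forall>x. ?q M (A *v x) \<le> ?q M x"
    and e0: "?q M (\<chi> i. 1) = 0"
    using assms by (auto simp: classQ_def Let_def)
  have fin: "finite (perm_matrices :: (real^'n^'n) set)"
  proof -
    have "(perm_matrices :: (real^'n^'n) set) = perm_matrix ` {\<sigma>::'n\<Rightarrow>'n. \<sigma> permutes UNIV}"
      by (auto simp: perm_matrices_def)
    moreover have "finite {\<sigma>::'n\<Rightarrow>'n. \<sigma> permutes UNIV}" by (rule finite_permutations) simp
    ultimately show ?thesis by (metis finite_imageI)
  qed
  have qZ: "?q ?Z x = (\<Sum>P\<in>perm_matrices. ?q M (P *v x))" for x
    by (simp add: sum_mv[OF fin] inner_sum_right quad_conj)
  have pmS: "P \<in> perm_matrices \<Longrightarrow> \<exists>\<sigma>. \<sigma> permutes UNIV \<and> P = perm_matrix \<sigma>" for P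
    by (auto simp: perm_matrices_def)
  have idin: "mat 1 \<in> (perm_matrices :: (real^'n^'n) set)"
  proof -
    have "perm_matrix id = (mat 1 :: real^'n^'n)"
      by (simp add: perm_matrix_def mat_def vec_eq_iff)
    moreover have "perm_matrix id \<in> (perm_matrices :: (real^'n^'n) set)"
      unfolding perm_matrices_def using permutes_id[of "UNIV::'n set"] by blast
    ultimately show ?thesis by simp
  qed
  have psdZ: "\<forall>x. ?q ?Z x \<ge> 0" using psd by (simp add: qZ sum_nonneg)
  have symZ: "transpose ?Z = ?Z"
  proof -
    have "transpose ?Z = (\<Sum>P\<in>perm_matrices. transpose (transpose P ** M ** P))"
      by (simp add: transpose_def vec_eq_iff)
    also have "\<dots> = ?Z" by (simp add: matrix_transpose_mul sym matrix_mul_assoc)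
    finally show ?thesis .
  qed
  have nzZ: "?Z \<noteq> 0"
  proof
    assume "?Z = 0"
    have "\<forall>x. ?q M (mat 1 *v x) = 0"
    proof
      fix x :: "real^'n"
      have "(\<Sum>P\<in>perm_matrices. ?q M (P *v x)) = 0" using qZ[of x] \<open>?Z = 0\<close> by simp
      hence "\<forall>P\<in>perm_matrices. ?q M (P *v x) = 0"
        using sum_nonneg_eq_0_iff[OF fin, of "\<lambda>P. ?q M (P *v x)"] psd by blast
      thus "?q M (mat 1 *v x) = 0" using idin by blast
    qed
    hence "M = 0" using quad_zero[OF sym] by simp
    thus False using nz by simp
  qed
  have conZ: "\<forall>A\<in>classA. \<forall>x. ?q ?Z (A *v x) \<le> ?q ?Z x"
  proof (intro ballI allI)
    fix A :: "real^'n^'n" and x :: "real^'n" assume A: "A \<in> classA"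
    show "?q ?Z (A *v x) \<le> ?q ?Z x" unfolding qZ
    proof (rule sum_mono)
      fix P assume "P \<in> (perm_matrices :: (real^'n^'n) set)"
      then obtain \<sigma> where s: "\<sigma> permutes UNIV" and P: "P = perm_matrix \<sigma>" using pmS by blast
      show "?q M (P *v (A *v x)) \<le> ?q M (P *v x)"
        unfolding P conj_mv[OF s] using con conj_classA[OF s A] by blast
    qed
  qed
  have eZ: "?q ?Z (\<chi> i. 1) = 0"
  proof -
    have "P \<in> perm_matrices \<Longrightarrow> P *v (\<chi> i. 1) = ((\<chi> i. 1) :: real^'n)" for P
    proof -
      assume "P \<in> perm_matrices"
      then obtain \<sigma> where "P = perm_matrix \<sigma>" using pmS by blast
      thus ?thesis by (simp only: pm_mv) (simp add: vec_eq_iff)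
    qed
    thus ?thesis by (simp add: qZ e0)
  qed
  show ?thesis using nzZ symZ psdZ conZ eZ by (simp add: classQ_def Let_def)
qed

end
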